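(* Let $p\geq 80$ be a prime, let $0<\alpha\leq \frac15$ be real, let $d\in[2,p-2]$ be an integer, and let $N$ be a positive integer. Let $I$ and $J$ be arithmetic progressions in $\mathbb{Z}/p\mathbb{Z}$ having the same common difference and satisfying $|I|=2N-1$, $|J|>(1+\alpha)N-3$, and $|I\cap (d\cdot J)|\leq \alpha N-2$. Then $N<\frac{p+3}{3+\alpha}$.
   Context: An arithmetic progression in $\mathbb{Z}/p\mathbb{Z}$ with difference $g\neq 0$ is a set of the form $\{a, a+g,\dots,a+(k-1)g\}$ with $1\le k\le p$. For $X\subseteq\mathbb{Z}/p\mathbb{Z}$ and an integer $d$, the dilate is $d\cdot X=\{dx: x\in X\}$. *)

theory Defs
  imports "HOL-Computational_Algebra.Primes" Complex_Main
begin

text \<open>Z/pZ is represented by the canonical residues {0..<p} of type int.\<close>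

definition arith_prog :: "int \<Rightarrow> int \<Rightarrow> int \<Rightarrow> nat \<Rightarrow> int set" where
  "arith_prog p a g k = {(a + int i * g) mod p | i. i < k}"

definition is_AP_with_diff :: "int \<Rightarrow> int \<Rightarrow> int set \<Rightarrow> bool" where
  "is_AP_with_diff p g X \<longleftrightarrow> g mod p \<noteq> 0 \<and>
     (\<exists>a k. 1 \<le> k \<and> int k \<le> p \<and> X = arith_prog p a g k)"

definition dilate :: "int \<Rightarrow> int \<Rightarrow> int set \<Rightarrow> int set" where
  "dilate p d X = (\<lambda>x. (d * x) mod p) ` X"

end

theory Submission
  imports Defs "HOL-Number_Theory.Cong"
begin

lemma inj_mod_lemma:
  fixes p x c :: int and i j k :: nat
  assumes "prime p" "\<not> p dvd c" "i < k" "j < k" "int k \<le> p"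
    and "(x + int i * c) mod p = (x + int j * c) mod p"
  shows "i = j"
proof -
  have "p dvd (x + int i * c) - (x + int j * c)" using assms(6) by (simp add: mod_eq_dvd_iff)
  hence "p dvd (int i - int j) * c" by (simp add: algebra_simps)
  hence "p dvd (int i - int j)" using assms(1,2) prime_dvd_mult_iff by blast
  moreover have "\<bar>int i - int j\<bar> < p" using assms by linarith
  ultimately have "int i - int j = 0" using dvd_imp_le_int[of "int i - int j" p] by linarith
  thus ?thesis by simp
qed

lemma card_ap:
  assumes "prime p" "g mod p \<noteq> 0" "int k \<le> p"
  shows "card (arith_prog p a g k) = k"
proof -
  have "arith_prog p a g k = (\<lambda>i. (a + int i * g) mod p) ` {..<k}"
    unfolding arith_prog_def by auto
  moreover have "inj_on (\<lambda>i. (a + int i * g) mod p) {..<k}"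
    using inj_mod_lemma[OF assms(1) _ _ _ assms(3)] assms(2)
    by (intro inj_onI) (auto simp: dvd_eq_mod_eq_0)
  ultimately show ?thesis by (simp add: card_image)
qed

lemma mem_ap:
  fixes p a g gi z :: int
  assumes "p > 0" "[g * gi = 1] (mod p)" "int k \<le> p" "0 \<le> z" "z < p"
  shows "z \<in> arith_prog p a g k \<longleftrightarrow> ((z - a) * gi) mod p < int k"
proof
  assume "z \<in> arith_prog p a g k"
  then obtain i where i: "i < k" "z = (a + int i * g) mod p" unfolding arith_prog_def by auto
  have "((z - a) * gi) mod p = ((a + int i * g - a) * gi) mod p"
    using i(2) by (metis mod_diff_left_eq mod_mult_left_eq)
  also have "\<dots> = (int i * (g * gi)) mod p" by (simp add: algebra_simps)
  also have "\<dots> = (int i * 1) mod p" using assms(2) unfolding cong_def by (metis mod_mult_right_eq)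
  also have "\<dots> = int i" using i(1) assms by simp
  finally have "((z - a) * gi) mod p = int i" .
  thus "((z - a) * gi) mod p < int k" using i(1) by linarith
next
  assume h: "((z - a) * gi) mod p < int k"
  define i where "i = nat (((z - a) * gi) mod p)"
  have ii: "int i = ((z - a) * gi) mod p" unfolding i_def using assms(1) by simp
  have "(a + int i * g) mod p = (a + ((z - a) * gi) * g) mod p"
    unfolding ii by (metis mod_add_right_eq mod_mult_left_eq)
  also have "\<dots> = (a + (z - a) * (g * gi)) mod p" by (simp add: algebra_simps)
  also have "\<dots> = (a + (z - a) * 1) mod p" using assms(2) unfolding cong_def
    by (metis mod_add_right_eq mod_mult_right_eq)
  also have "\<dots> = z" using assms by simp
  finally have "z = (a + int i * g) mod p" by simp
  moreover have "i < k" using h ii by linarith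
  ultimately show "z \<in> arith_prog p a g k" unfolding arith_prog_def by auto
qed

lemma pos_w:
  fixes p a b d g gi :: int
  assumes "[g * gi = 1] (mod p)"
  shows "(((d * ((b + int j * g) mod p)) mod p - a) * gi) mod p = ((d*b - a)*gi + int j * d) mod p"
proof -
  have "(((d * ((b + int j * g) mod p)) mod p - a) * gi) mod p = ((d * (b + int j * g) - a) * gi) mod p"
    by (metis mod_diff_left_eq mod_mult_left_eq mod_mult_right_eq)
  also have "\<dots> = ((d*b - a)*gi + int j * d * (g * gi)) mod p" by (simp add: algebra_simps)
  also have "\<dots> = ((d*b - a)*gi + int j * d * 1) mod p" using assms unfolding cong_def
    by (metis mod_add_right_eq mod_mult_right_eq)
  finally show ?thesis by simp
qed

lemma pair_count:
  fixes p d x0 kI :: int and m t :: nat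
  assumes "prime p" "\<not> p dvd d" "int m \<le> p" "0 \<le> kI" "t \<le> m"
  shows "int m - int t - 2 * int (card {j. j < m \<and> (x0 + int j * d) mod p < kI})
         \<le> max 0 (p - (int t * d) mod p - kI) + max 0 ((int t * d) mod p - kI)"
proof -
  define y where "y j = (x0 + int j * d) mod p" for j :: nat
  define r where "r = (int t * d) mod p"
  define B where "B = {j. j < m \<and> y j < kI}"
  define B' where "B' = {i. i + t < m \<and> y (i + t) < kI}"
  define P where "P = {i. i + t < m \<and> \<not> y i < kI \<and> \<not> y (i + t) < kI}"
  define U where "U = {u. kI \<le> u \<and> u < p \<and> kI \<le> (u + r) mod p}"
  have p0: "p > 0" using assms(1) prime_gt_0_int by blast
  have finB: "finite B" unfolding B_def by simp
  have finP: "finite P" unfolding P_def by (rule finite_subset[of _ "{..<m}"]) auto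
  have finB': "finite B'" unfolding B'_def by (rule finite_subset[of _ "{..<m}"]) auto
  have sub: "{..<m - t} \<subseteq> P \<union> B \<union> B'" unfolding P_def B_def B'_def by auto
  have c0: "m - t \<le> card (P \<union> B \<union> B')"
    using card_mono[OF _ sub] finP finB finB' by simp
  have c2: "card (P \<union> B \<union> B') \<le> card P + card B + card B'"
    by (meson add_le_mono1 card_Un_le le_trans)
  have c3: "card B' \<le> card B"
  proof (rule card_inj_on_le[where f = "\<lambda>i. i + t"])
    show "inj_on (\<lambda>i. i + t) B'" by (simp add: inj_on_def)
    show "(\<lambda>i. i + t) ` B' \<subseteq> B" unfolding B'_def B_def by auto
  qed (fact finB)
  have c1: "m - t \<le> card P + 2 * card B" using c0 c2 c3 by linarith
  have yshift: "y (i + t) = (y i + r) mod p" for i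
  proof -
    have "x0 + int (i + t) * d = (x0 + int i * d) + int t * d" by (simp add: algebra_simps)
    thus ?thesis unfolding y_def r_def by (metis mod_add_eq)
  qed
  have "inj_on y P"
  proof (rule inj_onI)
    fix i j assume "i \<in> P" "j \<in> P" "y i = y j"
    thus "i = j" using inj_mod_lemma[OF assms(1) assms(2), of i m j x0] assms(3)
      unfolding P_def y_def by auto
  qed
  moreover have "y ` P \<subseteq> U"
  proof
    fix u assume "u \<in> y ` P"
    then obtain i where i: "i \<in> P" "u = y i" by auto
    have "0 \<le> u" "u < p" using p0 i(2) unfolding y_def by auto
    thus "u \<in> U" using i yshift[of i] unfolding P_def U_def by auto
  qed
  moreover have "U \<subseteq> {kI..<p - r} \<union> {p + kI - r..<p}"
  proof
    fix u assume u: "u \<in> U"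
    have r: "0 \<le> r" "r < p" unfolding r_def using p0 by auto
    show "u \<in> {kI..<p - r} \<union> {p + kI - r..<p}"
    proof (cases "u + r < p")
      case True
      then show ?thesis using u unfolding U_def by auto
    next
      case False
      have "(u + r) mod p = u + r - p"
      proof -
        have uu: "u < p" using u unfolding U_def by auto
        have "(u + r) mod p = (u + r - p) mod p" by (simp add: minus_mod_self2)
        also have "\<dots> = u + r - p" using False uu r by (intro mod_pos_pos_trivial) auto
        finally show ?thesis .
      qed
      then show ?thesis using u False unfolding U_def by auto
    qed
  qed
  ultimately have "card P \<le> card ({kI..<p - r} \<union> {p + kI - r..<p})"
    by (meson card_inj_on_le finite_Un finite_atLeastLessThan_int subset_trans)
  also have "\<dots> \<le> nat (p - r - kI) + nat (r - kI)"
    using card_Un_le[of "{kI..<p - r}" "{p + kI - r..<p}"] by simp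
  finally have "card P \<le> nat (p - r - kI) + nat (r - kI)" .
  with c1 have "int m - int t \<le> int (nat (p - r - kI) + nat (r - kI)) + 2 * int (card B)"
    using assms(5) by linarith
  thus ?thesis unfolding r_def B_def y_def by (simp add: max_def split: if_splits)
qed

lemma core:
  fixes p d x0 kI :: int and m e :: nat
  assumes "prime p" "2 \<le> d" "d \<le> p - 2" "int m \<le> p" "0 \<le> kI" "kI \<le> p"
    and e: "e = card {j. j < m \<and> (x0 + int j * d) mod p < kI}"
    and "p - kI \<le> int m" "p - kI \<le> kI" "int m \<ge> 4 * int e + 3" "6 * int e + 3 < kI"
  shows False
proof -
  have nd: "\<not> p dvd d" using assms(2,3) zdvd_not_zless[of d p] by auto
  have pc: "int m - int t - 2 * int e
         \<le> max 0 (p - (int t * d) mod p - kI) + max 0 ((int t * d) mod p - kI)" if "t \<le> m" for t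
    using pair_count[OF assms(1) nd assms(4) assms(5) that, of x0] e by simp
  have "(int 1 * d) mod p = d" using assms(2,3) by simp
  hence h1: "int m - 1 - 2 * int e \<le> max 0 (p - d - kI) + max 0 (d - kI)"
    using pc[of 1] assms(10) by simp
  define \<delta> where "\<delta> = min d (p - d)"
  have d2: "\<delta> \<ge> 2" using assms(2,3) unfolding \<delta>_def by simp
  have dle: "\<delta> \<le> 2 * int e + 1" using h1 assms(8,9,10) unfolding \<delta>_def
    by (simp add: max_def min_def split: if_splits)
  define q where "q = (2 * int e + 1) div (\<delta> - 1)"
  have q0: "q \<ge> 0" unfolding q_def using d2 by (simp add: pos_imp_zdiv_nonneg_iff)
  have dm: "q * (\<delta> - 1) + (2 * int e + 1) mod (\<delta> - 1) = 2 * int e + 1"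
    unfolding q_def by (rule div_mult_mod_eq)
  have mm: "0 \<le> (2 * int e + 1) mod (\<delta> - 1)" "(2 * int e + 1) mod (\<delta> - 1) < \<delta> - 1"
    using d2 by simp_all
  have qa: "q * (\<delta> - 1) \<le> 2 * int e + 1" using dm mm by linarith
  have qb: "2 * int e + 1 < q * (\<delta> - 1) + (\<delta> - 1)" using dm mm by linarith
  have qc: "q \<le> q * (\<delta> - 1)" using d2 q0 by (simp add: mult_le_cancel_left1)
  define t where "t = nat (q + 1)"
  have ti: "int t = q + 1" unfolding t_def using q0 by simp
  define X where "X = q * (\<delta> - 1) + (\<delta> - 1)"
  have tdel: "int t * \<delta> = X + q + 1" unfolding X_def ti by (simp add: algebra_simps)
  have Xb: "X \<le> 2 * int e + 1 + (\<delta> - 1)" unfolding X_def using qa by (simp add: algebra_simps)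
  have tm: "t \<le> m" using ti qa qc assms(10) by linarith
  have tdpos: "0 < int t * \<delta>" "int t * \<delta> < p" using tdel Xb qb qa qc q0 dle assms(6,11) X_def by linarith+
  have r: "(int t * d) mod p = int t * \<delta> \<or> (int t * d) mod p = p - int t * \<delta>"
  proof (cases "d \<le> p - d")
    case True
    hence "\<delta> = d" unfolding \<delta>_def by simp
    thus ?thesis using tdpos by simp
  next
    case False
    hence "\<delta> = p - d" unfolding \<delta>_def by simp
    hence "d = p - \<delta>" by simp
    hence "int t * d = int t * (p - \<delta>)" by simp
    also have "\<dots> = (p - int t * \<delta>) + (int t - 1) * p" by (simp add: algebra_simps)
    finally have "int t * d = (p - int t * \<delta>) + (int t - 1) * p" .
    hence "(int t * d) mod p = (p - int t * \<delta>) mod p" by simp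
    also have "\<dots> = p - int t * \<delta>" using tdpos by (intro mod_pos_pos_trivial) auto
    finally show ?thesis by simp
  qed
  have "int m - int t - 2 * int e
         \<le> max 0 (p - (int t * d) mod p - kI) + max 0 ((int t * d) mod p - kI)" using pc[OF tm] .
  thus False using r tdel Xb qb qa qc q0 dle assms(6,8,9,10,11) X_def ti
    by (auto simp: max_def split: if_splits)
qed

theorem lemma3p3:
  fixes p d :: int and \<alpha> :: real and N :: nat and I J :: "int set" and g :: int
  assumes "prime p" and "p \<ge> 80"
    and "0 < \<alpha>" and "\<alpha> \<le> 1/5"
    and "2 \<le> d" and "d \<le> p - 2"
    and "N > 0"
    and "is_AP_with_diff p g I" and "is_AP_with_diff p g J"
    and "card I = 2 * N - 1"
    and "real (card J) > (1 + \<alpha>) * real N - 3"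
    and "real (card (I \<inter> dilate p d J)) \<le> \<alpha> * real N - 2"
  shows "real N < (real_of_int p + 3) / (3 + \<alpha>)"
proof (rule ccontr)
  assume neg: "\<not> real N < (real_of_int p + 3) / (3 + \<alpha>)"
  have p0: "p > 0" using assms(1) prime_gt_0_int by blast
  obtain a kI where gI: "g mod p \<noteq> 0" and kI: "1 \<le> kI" "int kI \<le> p" and Ieq: "I = arith_prog p a g kI"
    using assms(8) unfolding is_AP_with_diff_def by blast
  obtain b m where m: "1 \<le> m" "int m \<le> p" and Jeq: "J = arith_prog p b g m"
    using assms(9) unfolding is_AP_with_diff_def by blast
  have cI: "card I = kI" using card_ap[OF assms(1) gI kI(2)] Ieq by simp
  have cJ: "card J = m" using card_ap[OF assms(1) gI m(2)] Jeq by simp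
  have "\<not> p dvd g" using gI by (simp add: dvd_eq_mod_eq_0)
  hence "coprime p g" using prime_imp_coprime[OF assms(1)] by blast
  hence "coprime g p" by (simp add: coprime_commute)
  then obtain gi where gi: "[g * gi = 1] (mod p)" using cong_solve_coprime_int by blast
  have nd: "\<not> p dvd d" using assms(5,6) zdvd_not_zless[of d p] by auto
  define x0 where "x0 = (d*b - a)*gi"
  define w where "w j = (d * ((b + int j * g) mod p)) mod p" for j :: nat
  define y where "y j = (x0 + int j * d) mod p" for j :: nat
  have posw: "((w j - a) * gi) mod p = y j" for j
    unfolding w_def y_def x0_def using pos_w[OF gi] by simp
  have wr: "0 \<le> w j" "w j < p" for j unfolding w_def using p0 by auto
  have dil: "dilate p d J = w ` {..<m}"
    unfolding dilate_def Jeq arith_prog_def w_def by auto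
  have memI: "w j \<in> I \<longleftrightarrow> y j < int kI" for j
    unfolding Ieq using mem_ap[OF p0 gi kI(2) wr(1)[of j] wr(2)[of j], of a] posw[of j] by simp
  have int_eq: "I \<inter> dilate p d J = w ` {j. j < m \<and> y j < int kI}"
    unfolding dil using memI by auto
  have "inj_on w {..<m}"
  proof (rule inj_onI)
    fix i j assume "i \<in> {..<m}" "j \<in> {..<m}" and a3: "w i = w j"
    have "y i = y j" using posw[of i] posw[of j] a3 by simp
    moreover have "i < m" "j < m" using \<open>i \<in> {..<m}\<close> \<open>j \<in> {..<m}\<close> by auto
    ultimately have "y i = y j" "i < m" "j < m" by auto
    thus "i = j" using inj_mod_lemma[OF assms(1) nd, of i m j x0] m(2) unfolding y_def by auto
  qed
  hence "inj_on w {j. j < m \<and> y j < int kI}" by (rule inj_on_subset) auto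
  hence ce: "card (I \<inter> dilate p d J) = card {j. j < m \<and> y j < int kI}"
    unfolding int_eq by (simp add: card_image)
  define e where "e = card {j. j < m \<and> y j < int kI}"
  have kIN: "int kI = 2 * int N - 1" using cI assms(10,7) by linarith
  define A where "A = \<alpha> * real N"
  have A1: "A \<le> real N / 5" unfolding A_def using assms(4) mult_right_mono[OF assms(4), of "real N"] by simp
  have A2: "(1 + \<alpha>) * real N = real N + A" unfolding A_def by (simp add: algebra_simps)
  have A3: "(3 + \<alpha>) * real N = 3 * real N + A" unfolding A_def by (simp add: algebra_simps)
  have "(real_of_int p + 3) / (3 + \<alpha>) \<le> real N" using neg by simp
  hence "real_of_int p + 3 \<le> real N * (3 + \<alpha>)" using assms(3) by (simp add: divide_le_eq)
  hence hp: "real_of_int p + 3 \<le> 3 * real N + A" using A3 by (simp add: algebra_simps)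
  have hm: "real m > real N + A - 3" using assms(11) A2 cJ by simp
  have he: "real e \<le> A - 2" using assms(12) ce unfolding e_def A_def by simp
  have kIr: "real_of_int (int kI) = 2 * real N - 1" using kIN by simp
  have f1: "real_of_int (p - int kI) < real m + 1" using hp hm kIr by simp
  have f2: "real_of_int (p - int kI) \<le> real_of_int (int kI)" using hp kIr A1 by simp
  have f3: "real m > 4 * real e + 2" using hm he A1 by linarith
  have f4: "6 * real e + 3 < real_of_int (int kI)" using he A1 kIr by linarith
  show False
  proof (rule core[OF assms(1,5,6) m(2) _ kI(2)])
    show "0 \<le> int kI" by simp
    show "e = card {j. j < m \<and> (x0 + int j * d) mod p < int kI}" unfolding e_def y_def ..
    show "p - int kI \<le> int m" using f1 by linarith
    show "p - int kI \<le> int kI" using f2 by linarith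
    show "4 * int e + 3 \<le> int m" using f3 by linarith
    show "6 * int e + 3 < int kI" using f4 by linarith
  qed
qed

end
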